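(* Let $(D_d)_{d\in\mathbb{N}}$ satisfy Property (P). Let $(L_d)_{d\in\mathbb N}$ be positive numbers and \[ C_d^0(L)=\{f\colon D_d\to\mathbb{R} \mid \|f\|_\infty\le 1,\ \operatorname{Lip}(f)\le L_d\}. \] Then the curse of dimensionality holds for the integration problem on $(C_d^0(L))_{d}$ if and only if $\limsup_{d\to\infty} L_d\sqrt{d}>0$.
   Context: Property (P): $(D_d)_{d\in\mathbb{N}}$ is a sequence of open sets $D_d\subset\mathbb{R}^d$ with Lebesgue measure $\lambda_d(D_d)=1$ for which there exist points $x_d^*\in D_d$ and $R<\infty$ with $\lim_{d\to\infty}\lambda_d(\{x\in D_d\mid \|x-x_d^*\|_2\ge R\sqrt d\})=0$. $\operatorname{Lip}(f)=\sup_{x\neq y}|f(x)-f(y)|/\|x-y\|_2$ and $\|f\|_\infty=\sup_{x\in D_d}|f(x)|$. Integration problem: approximate $S_d(f)=\int_{D_d}f(x)\,dx$ for $f\in F_d$ by algorithms $A_{n,d}(f)=\phi_{n,d}(f(x_1),\dots,f(x_n))$ with points $x_j\in D_d$ possibly chosen adaptively (depending on previously computed values) and arbitrary $\phi_{n,d}\colon\mathbb{R}^n\to\mathbb{R}$ (for $n=0$, constant algorithms). The worst-case error is $e(A_{n,d})=\sup_{f\in F_d}|S_d(f)-A_{n,d}(f)|$, and the information complexity $n(\varepsilon,F_d)$ is the minimal $n$ for which some such $A_{n,d}$ has $e(A_{n,d})\le\varepsilon$. The curse of dimensionality holds for $(F_d)$ if there exist $c,\varepsilon_0,\gamma>0$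 with $n(\varepsilon,F_d)\ge c(1+\gamma)^d$ for all $\varepsilon\le\varepsilon_0$ and infinitely many $d\in\mathbb{N}$. *)

theory Defs
  imports "HOL-Probability.Probability"
begin

text \<open>R^d is represented by the extensional functions on {..<d}:
  the carrier of the finite product measure below.\<close>

definition lebesgue_d :: "nat \<Rightarrow> (nat \<Rightarrow> real) measure" where
  "lebesgue_d d = PiM {..<d} (\<lambda>_. lborel)"

definition space_d :: "nat \<Rightarrow> (nat \<Rightarrow> real) set" where
  "space_d d = PiE {..<d} (\<lambda>_. UNIV)"

definition dist_d :: "nat \<Rightarrow> (nat \<Rightarrow> real) \<Rightarrow> (nat \<Rightarrow> real) \<Rightarrow> real" where
  "dist_d d x y = sqrt (\<Sum>i<d. (x i - y i)^2)"

definition open_d :: "nat \<Rightarrow> (nat \<Rightarrow> real) set \<Rightarrow> bool" where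
  "open_d d U \<longleftrightarrow> U \<subseteq> space_d d \<and>
     (\<forall>x\<in>U. \<exists>r>0. \<forall>y\<in>space_d d. dist_d d x y < r \<longrightarrow> y \<in> U)"

definition property_P :: "(nat \<Rightarrow> (nat \<Rightarrow> real) set) \<Rightarrow> bool" where
  "property_P D \<longleftrightarrow>
     (\<forall>d. open_d d (D d) \<and> D d \<in> sets (lebesgue_d d) \<and> emeasure (lebesgue_d d) (D d) = 1) \<and>
     (\<exists>(xs :: nat \<Rightarrow> nat \<Rightarrow> real) (R :: real). (\<forall>d. xs d \<in> D d) \<and>
        (\<lambda>d. measure (lebesgue_d d) {x \<in> D d. dist_d d x (xs d) \<ge> R * sqrt (real d)})
          \<longlonglongrightarrow> 0)"

definition C0 :: "(nat \<Rightarrow> (nat \<Rightarrow> real) set) \<Rightarrow> (nat \<Rightarrow> real) \<Rightarrow> nat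
                  \<Rightarrow> ((nat \<Rightarrow> real) \<Rightarrow> real) set" where
  "C0 D L d = {f. (\<forall>x\<in>D d. \<bar>f x\<bar> \<le> 1) \<and>
                  (\<forall>x\<in>D d. \<forall>y\<in>D d. \<bar>f x - f y\<bar> \<le> L d * dist_d d x y)}"

definition S_d :: "(nat \<Rightarrow> (nat \<Rightarrow> real) set) \<Rightarrow> nat \<Rightarrow> ((nat \<Rightarrow> real) \<Rightarrow> real) \<Rightarrow> real" where
  "S_d D d f = (LINT x:D d|lebesgue_d d. f x)"

text \<open>Adaptive information: the k-th point is P k applied to the list of the
  previously computed k function values.\<close>
fun info :: "(nat \<Rightarrow> real list \<Rightarrow> (nat \<Rightarrow> real)) \<Rightarrow> ((nat \<Rightarrow> real) \<Rightarrow> real) \<Rightarrow> nat \<Rightarrow> real list" where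
  "info P f 0 = []"
| "info P f (Suc k) = info P f k @ [f (P k (info P f k))]"

definition admissible_points :: "(nat \<Rightarrow> (nat \<Rightarrow> real) set) \<Rightarrow> nat \<Rightarrow> nat
     \<Rightarrow> (nat \<Rightarrow> real list \<Rightarrow> (nat \<Rightarrow> real)) \<Rightarrow> bool" where
  "admissible_points D d n P \<longleftrightarrow> (\<forall>k<n. \<forall>ys. length ys = k \<longrightarrow> P k ys \<in> D d)"

definition achieves :: "(nat \<Rightarrow> (nat \<Rightarrow> real) set) \<Rightarrow> nat \<Rightarrow> ((nat \<Rightarrow> real) \<Rightarrow> real) set
     \<Rightarrow> nat \<Rightarrow> real \<Rightarrow> bool" where
  "achieves D d F n \<epsilon> \<longleftrightarrow>
     (\<exists>P (\<phi> :: real list \<Rightarrow> real). admissible_points D d n P \<and>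
        (\<forall>f\<in>F. \<bar>S_d D d f - \<phi> (info P f n)\<bar> \<le> \<epsilon>))"

text \<open>Curse of dimensionality: n(eps,F_d) \<ge> c(1+gamma)^d, i.e. every n achieving
  error eps satisfies the bound (information complexity is the least such n).\<close>
definition curse :: "(nat \<Rightarrow> (nat \<Rightarrow> real) set) \<Rightarrow> (nat \<Rightarrow> ((nat \<Rightarrow> real) \<Rightarrow> real) set) \<Rightarrow> bool" where
  "curse D F \<longleftrightarrow> (\<exists>c \<epsilon>0 \<gamma>. c > 0 \<and> \<epsilon>0 > 0 \<and> \<gamma> > 0 \<and>
     infinite {d. \<forall>\<epsilon>. 0 < \<epsilon> \<and> \<epsilon> \<le> \<epsilon>0 \<longrightarrow>
        (\<forall>n. achieves D d (F d) n \<epsilon> \<longrightarrow> real n \<ge> c * (1 + \<gamma>) ^ d)})"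

end

theory Submission imports Defs begin

lemma space_lebesgue_d[simp]: "space (lebesgue_d d) = space_d d"
  by (simp add: lebesgue_d_def space_d_def space_PiM)

lemma comp_meas[measurable]: "i < d \<Longrightarrow> (\<lambda>x. x i) \<in> borel_measurable (lebesgue_d d)"
  unfolding lebesgue_d_def
  by (metis lessThan_iff measurable_component_singleton measurable_lborel1)

lemma dist_meas[measurable]: "(\<lambda>x. dist_d d x q) \<in> borel_measurable (lebesgue_d d)"
  unfolding dist_d_def by measurable

lemma dist_L2: "dist_d d x y = L2_set (\<lambda>i. x i - y i) {..<d}"
  by (simp add: dist_d_def L2_set_def)

lemma dist_nonneg: "0 \<le> dist_d d x y" by (simp add: dist_d_def sum_nonneg)

lemma dist_triangle_d: "dist_d d x z \<le> dist_d d x y + dist_d d y z"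
proof -
  have "dist_d d x z = L2_set (\<lambda>i. (x i - y i) + (y i - z i)) {..<d}"
    by (simp add: dist_L2)
  also have "\<dots> \<le> dist_d d x y + dist_d d y z"
    unfolding dist_L2 by (rule L2_set_triangle_ineq)
  finally show ?thesis .
qed

lemma dist_sym_d: "dist_d d x y = dist_d d y x"
  by (simp add: dist_d_def power2_commute)

lemma dist_self_d[simp]: "dist_d d x x = 0" by (simp add: dist_d_def)

lemma limsup_pos_iff:
  fixes u :: "nat \<Rightarrow> real"
  assumes "\<And>d. u d \<ge> 0"
  shows "limsup (\<lambda>d. ereal (u d)) > 0 \<longleftrightarrow> (\<exists>c>0. infinite {d. u d > c})"
proof
  assume "limsup (\<lambda>d. ereal (u d)) > 0"
  then obtain c where c: "0 < ereal c" "ereal c < limsup (\<lambda>d. ereal (u d))"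
    using ereal_dense2 by blast
  have "frequently (\<lambda>d. ereal c < ereal (u d)) sequentially"
  proof (rule ccontr)
    assume "\<not> ?thesis"
    then have "eventually (\<lambda>d. ereal (u d) \<le> ereal c) sequentially"
      by (simp add: not_frequently not_less)
    then have "limsup (\<lambda>d. ereal (u d)) \<le> ereal c" by (rule Limsup_bounded)
    with c show False by simp
  qed
  then have "infinite {d. u d > c}"
    by (simp add: frequently_cofinite[symmetric] cofinite_eq_sequentially)
  with c show "\<exists>c>0. infinite {d. u d > c}" by auto
next
  assume "\<exists>c>0. infinite {d. u d > c}"
  then obtain c where c: "c > 0" "infinite {d. u d > c}" by auto
  then have "frequently (\<lambda>d. ereal c < ereal (u d)) sequentially"
    by (simp add: frequently_cofinite[symmetric] cofinite_eq_sequentially)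
  then have freq: "frequently (\<lambda>d. ereal c < ereal (u d)) sequentially" .
  have "ereal c \<le> limsup (\<lambda>d. ereal (u d))"
  proof (rule ccontr)
    assume "\<not> ?thesis"
    then have "limsup (\<lambda>d. ereal (u d)) < ereal c" by simp
    then have "eventually (\<lambda>d. ereal (u d) < ereal c) sequentially" by (rule Limsup_lessD)
    then have "eventually (\<lambda>d. \<not> ereal c < ereal (u d)) sequentially"
      by (rule eventually_mono) auto
    with freq show False by (simp add: frequently_def)
  qed
  with c show "limsup (\<lambda>d. ereal (u d)) > 0"
    by (metis ereal_less(2) order_less_le_trans)
qed

lemma not_infinite_tendsto:
  fixes u :: "nat \<Rightarrow> real"
  assumes "\<And>d. u d \<ge> 0" "\<not> (\<exists>c>0. infinite {d. u d > c})"
  shows "u \<longlonglongrightarrow> 0"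
proof (rule tendstoI)
  fix e :: real assume "e > 0"
  have "finite {d. u d > e/2}" using assms(2) \<open>e>0\<close> half_gt_zero by blast
  then have "eventually (\<lambda>d. \<not> u d > e/2) sequentially"
    by (simp add: cofinite_eq_sequentially[symmetric] eventually_cofinite)
  then show "eventually (\<lambda>d. dist (u d) 0 < e) sequentially"
    by eventually_elim (use assms(1) \<open>e > 0\<close> in auto)
qed

lemma rat_approx:
  assumes "x \<in> space_d d" "\<delta> > 0"
  shows "\<exists>q \<in> PiE {..<d} (\<lambda>_. \<rat>). dist_d d x q < \<delta>"
proof -
  define \<eta> where "\<eta> = \<delta> / (real d + 2)"
  have \<eta>: "\<eta> > 0" using assms by (simp add: \<eta>_def)
  have ex: "\<exists>z. z\<in>\<rat> \<and> x i - \<eta> < z \<and> z < x i + \<eta>" for i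
    using Rats_dense_in_real[of "x i - \<eta>" "x i + \<eta>"] \<eta> by auto
  define q where "q = (\<lambda>i. if i < d then (SOME z. z\<in>\<rat> \<and> x i - \<eta> < z \<and> z < x i + \<eta>) else undefined)"
  have qi: "i < d \<Longrightarrow> q i \<in> \<rat> \<and> x i - \<eta> < q i \<and> q i < x i + \<eta>" for i
  proof -
    assume "i < d"
    then have "q i = (SOME z. z\<in>\<rat> \<and> x i - \<eta> < z \<and> z < x i + \<eta>)" by (simp add: q_def)
    then show ?thesis using someI_ex[OF ex[of i]] by simp
  qed
  have qP: "q \<in> PiE {..<d} (\<lambda>_. \<rat>)"
  proof (rule PiE_I)
    fix i assume "i \<in> {..<d}" then show "q i \<in> \<rat>" using qi by simp
  next
    fix i assume "i \<notin> {..<d}" then show "q i = undefined" by (simp add: q_def)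
  qed
  have "(\<Sum>i<d. (x i - q i)^2) \<le> (\<Sum>i<d. \<eta>^2)"
  proof (rule sum_mono)
    fix i assume "i \<in> {..<d}"
    then have "\<bar>x i - q i\<bar> \<le> \<eta>" using qi[of i] by (simp add: abs_le_iff)
    then show "(x i - q i)^2 \<le> \<eta>^2"
      using abs_le_square_iff[of "x i - q i" \<eta>] \<eta> by simp
  qed
  also have "\<dots> = real d * \<eta>^2" by simp
  also have "\<dots> < \<delta>^2"
  proof -
    have dl: "\<delta> = (real d + 2) * \<eta>" unfolding \<eta>_def by simp
    have e1: "(real d + 2) * (real d + 2) = real d * real d + 4 * real d + 4"
      by (simp add: algebra_simps)
    have "0 \<le> real d * real d" by simp
    then have "real d < (real d + 2) * (real d + 2)" using e1 by linarith
    then have "real d * \<eta>^2 < ((real d + 2) * (real d + 2)) * \<eta>^2"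
      using \<eta> by (intro mult_strict_right_mono) auto
    also have "\<dots> = \<delta>^2" unfolding dl by (simp add: power2_eq_square ac_simps)
    finally show ?thesis .
  qed
  finally have "sqrt (\<Sum>i<d. (x i - q i)^2) < sqrt (\<delta>^2)"
    by (rule real_sqrt_less_mono)
  then have "dist_d d x q < \<delta>"
    unfolding dist_d_def using assms(2) by simp
  with qP show ?thesis by blast
qed

lemma lip_measurable:
  assumes op: "open_d d D" and Dm: "D \<in> sets (lebesgue_d d)" and K: "K \<ge> 0"
    and lip: "\<forall>x\<in>D. \<forall>y\<in>D. \<bar>f x - f y\<bar> \<le> K * dist_d d x y"
  shows "(\<lambda>x. indicator D x * f x) \<in> borel_measurable (lebesgue_d d)"
proof -
  define Q where "Q = D \<inter> PiE {..<d} (\<lambda>_. \<rat>)"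
  have cQ: "countable Q" unfolding Q_def
    by (intro countable_Int2 countable_PiE finite_lessThan countable_rat)
  define F where "F x = (INF q\<in>Q. f q + K * dist_d d x q)" for x
  have Fm: "F \<in> borel_measurable (lebesgue_d d)"
    unfolding F_def
    by (intro borel_measurable_cINF_real cQ borel_measurable_add borel_measurable_const
        borel_measurable_times dist_meas)
  have dense: "\<exists>q\<in>Q. dist_d d x q < e" if x: "x \<in> D" and e: "e > 0" for x e
  proof -
    from op x obtain r where r: "r > 0" "\<forall>y\<in>space_d d. dist_d d x y < r \<longrightarrow> y \<in> D"
      and xs: "x \<in> space_d d"
      unfolding open_d_def by blast
    obtain q where q: "q \<in> PiE {..<d} (\<lambda>_. \<rat>)" "dist_d d x q < min r e"
      using rat_approx[OF xs, of "min r e"] r e by auto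
    have "q \<in> space_d d" using q(1) by (auto simp: space_d_def PiE_def Pi_def)
    then have "q \<in> D" using r q by auto
    with q show ?thesis by (auto simp: Q_def)
  qed
  have FD: "F x = f x" if x: "x \<in> D" for x
  proof -
    have Qne: "Q \<noteq> {}" using dense[OF x, of 1] by auto
    have lowb: "f x \<le> f q + K * dist_d d x q" if "q \<in> Q" for q
    proof -
      have "q \<in> D" using that by (simp add: Q_def)
      then have "\<bar>f x - f q\<bar> \<le> K * dist_d d x q" using lip x by blast
      then show ?thesis by (simp add: abs_le_iff)
    qed
    have bdd: "bdd_below ((\<lambda>q. f q + K * dist_d d x q) ` Q)"
      using lowb by (auto intro!: bdd_belowI2)
    have ge: "f x \<le> F x" unfolding F_def by (rule cINF_greatest[OF Qne lowb])
    have le: "F x \<le> f x + e" if e: "e > 0" for e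
    proof -
      obtain q where q: "q \<in> Q" "dist_d d x q < e / (2*K + 1)"
        using dense[OF x, of "e / (2*K+1)"] e K by auto
      have "F x \<le> f q + K * dist_d d x q" unfolding F_def by (rule cINF_lower[OF bdd q(1)])
      also have "\<dots> \<le> f x + 2 * K * dist_d d x q"
      proof -
        have "q \<in> D" using q(1) by (simp add: Q_def)
        then have "\<bar>f q - f x\<bar> \<le> K * dist_d d q x" using lip x by blast
        then show ?thesis by (simp add: abs_le_iff dist_sym_d)
      qed
      also have "\<dots> \<le> f x + e"
      proof -
        have "2 * K * dist_d d x q \<le> (2*K+1) * dist_d d x q"
          using dist_nonneg[of d x q] by (simp add: mult_right_mono)
        also have "\<dots> \<le> (2*K+1) * (e/(2*K+1))" using q(2) K by (intro mult_left_mono) auto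
        also have "\<dots> = e" using K by simp
        finally show ?thesis by simp
      qed
      finally show ?thesis .
    qed
    have "F x \<le> f x" by (rule field_le_epsilon) (rule le)
    then show ?thesis using ge by linarith
  qed
  have "(\<lambda>x. indicator D x * F x) \<in> borel_measurable (lebesgue_d d)"
    by (intro borel_measurable_times borel_measurable_indicator Fm Dm)
  moreover have "indicator D x * F x = indicator D x * f x" for x
    by (cases "x \<in> D") (auto simp: FD)
  ultimately show ?thesis by simp
qed

lemma lip_integrable:
  assumes op: "open_d d D" and Dm: "D \<in> sets (lebesgue_d d)" and K: "K \<ge> 0"
    and fin: "emeasure (lebesgue_d d) D = 1"
    and lip: "\<forall>x\<in>D. \<forall>y\<in>D. \<bar>f x - f y\<bar> \<le> K * dist_d d x y"
    and bd: "\<forall>x\<in>D. \<bar>f x\<bar> \<le> B"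
  shows "integrable (lebesgue_d d) (\<lambda>x. indicator D x * f x)"
proof (rule Bochner_Integration.integrable_bound)
  show "integrable (lebesgue_d d) (\<lambda>x. B * indicator D x)"
    using Dm fin by (intro integrable_mult_right integrable_real_indicator) auto
  show "(\<lambda>x. indicator D x * f x) \<in> borel_measurable (lebesgue_d d)"
    by (rule lip_measurable[OF op Dm K lip])
  show "AE x in lebesgue_d d. norm (indicator D x * f x) \<le> norm (B * indicator D x)"
    by (rule AE_I2) (use bd in \<open>auto simp: indicator_def\<close>)
qed


lemma gauss_1d:
  fixes r c :: real
  assumes r: "r > 0"
  shows "(\<integral>\<^sup>+y. ennreal (exp (1/2 - (y - c)^2 / (2 * r^2))) \<partial>lborel)
         = ennreal (exp (1/2) * sqrt (2 * pi) * r)"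
proof -
  define K where "K = exp (1/2) * sqrt (2 * pi) * r"
  have K: "K > 0" using r by (simp add: K_def)
  have sq: "sqrt (2 * pi * r^2) = sqrt (2 * pi) * r"
    using r by (simp add: real_sqrt_mult)
  have eq: "exp (1/2 - (y - c)^2 / (2 * r^2)) = K * normal_density c r y" for y
  proof -
    have "exp (1/2 - (y - c)^2 / (2 * r^2)) = exp (1/2) * exp (- ((y - c)^2 / (2 * r^2)))"
      by (metis exp_add diff_conv_add_uminus)
    also have "\<dots> = K * normal_density c r y"
      unfolding normal_density_def K_def sq using r by (simp add: field_simps)
    finally show ?thesis .
  qed
  have "(\<integral>\<^sup>+y. ennreal (exp (1/2 - (y - c)^2 / (2 * r^2))) \<partial>lborel)
        = (\<integral>\<^sup>+y. ennreal K * ennreal (normal_density c r y) \<partial>lborel)"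
    using K by (simp add: eq ennreal_mult)
  also have "\<dots> = ennreal K * (\<integral>\<^sup>+y. ennreal (normal_density c r y) \<partial>lborel)"
    by (rule nn_integral_cmult) simp
  also have "(\<integral>\<^sup>+y. ennreal (normal_density c r y) \<partial>lborel) = 1"
    using r by (subst nn_integral_eq_integral) auto
  finally show ?thesis by (simp add: K_def)
qed

lemma ball_bound:
  fixes r :: real
  assumes r: "r > 0"
  shows "emeasure (lebesgue_d d) {x \<in> space_d d. dist_d d x p < r * sqrt (real d)}
         \<le> ennreal ((exp (1/2) * sqrt (2 * pi) * r) ^ d)"
proof -
  interpret product_sigma_finite "\<lambda>_::nat. lborel" by standard
  define A where "A = {x \<in> space_d d. dist_d d x p < r * sqrt (real d)}"
  define w where "w i y = ennreal (exp (1/2 - (y - p i)^2 / (2 * r^2)))" for i y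
  have Am: "A \<in> sets (lebesgue_d d)"
  proof -
    have "{x \<in> space (lebesgue_d d). dist_d d x p < r * sqrt (real d)} \<in> sets (lebesgue_d d)"
      by measurable
    then show ?thesis by (simp add: A_def)
  qed
  have "emeasure (lebesgue_d d) A = (\<integral>\<^sup>+x. indicator A x \<partial>lebesgue_d d)"
    using Am by simp
  also have "\<dots> \<le> (\<integral>\<^sup>+x. (\<Prod>i\<in>{..<d}. w i (x i)) \<partial>lebesgue_d d)"
  proof (rule nn_integral_mono)
    fix x assume xs: "x \<in> space (lebesgue_d d)"
    show "indicator A x \<le> (\<Prod>i\<in>{..<d}. w i (x i))"
    proof (cases "x \<in> A")
      case False then show ?thesis by simp
    next
      case True
      define S where "S = (\<Sum>i<d. (x i - p i)^2)"
      have S0: "0 \<le> S" unfolding S_def by (simp add: sum_nonneg)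
      have "sqrt S < r * sqrt (real d)" using True by (simp add: A_def dist_d_def S_def)
      also have "\<dots> = sqrt (r^2 * real d)" using r by (simp add: real_sqrt_mult)
      finally have "S < r^2 * real d" by simp
      then have Sd: "S / (2 * r^2) < real d / 2" using r by (simp add: divide_simps mult.commute)
      have "(\<Prod>i\<in>{..<d}. w i (x i)) = ennreal (\<Prod>i\<in>{..<d}. exp (1/2 - (x i - p i)^2 / (2 * r^2)))"
        unfolding w_def by (rule prod_ennreal) simp
      also have "(\<Prod>i\<in>{..<d}. exp (1/2 - (x i - p i)^2 / (2 * r^2)))
                 = exp (\<Sum>i\<in>{..<d}. (1/2 - (x i - p i)^2 / (2 * r^2)))"
        by (simp add: exp_sum)
      also have "(\<Sum>i\<in>{..<d}. (1/2 - (x i - p i)^2 / (2 * r^2))) = real d / 2 - S / (2 * r^2)"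
        by (simp add: S_def sum_subtractf sum_divide_distrib)
      finally have "(\<Prod>i\<in>{..<d}. w i (x i)) = ennreal (exp (real d / 2 - S / (2 * r^2)))" .
      moreover have "1 \<le> exp (real d / 2 - S / (2 * r^2))" using Sd by simp
      ultimately show ?thesis using True by simp
    qed
  qed
  also have "\<dots> = (\<Prod>i\<in>{..<d}. (\<integral>\<^sup>+y. w i y \<partial>lborel))"
    unfolding lebesgue_d_def by (rule product_nn_integral_prod) (auto simp: w_def)
  also have "\<dots> = (\<Prod>i\<in>{..<d}. ennreal (exp (1/2) * sqrt (2 * pi) * r))"
    unfolding w_def using gauss_1d[OF r] by simp
  also have "\<dots> = ennreal ((exp (1/2) * sqrt (2 * pi) * r) ^ d)"
    using r by (simp add: ennreal_power)
  finally show ?thesis by (simp add: A_def)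
qed

fun gm :: "real \<Rightarrow> nat \<Rightarrow> (nat \<Rightarrow> nat \<Rightarrow> real) \<Rightarrow> nat \<Rightarrow> (nat \<Rightarrow> real) \<Rightarrow> real" where
  "gm K d p 0 x = 1"
| "gm K d p (Suc k) x = min (gm K d p k x) (K * dist_d d x (p k))"

lemma gm_nonneg: "K \<ge> 0 \<Longrightarrow> 0 \<le> gm K d p k x"
  by (induction k) (auto simp: dist_nonneg)

lemma gm_le1: "gm K d p k x \<le> 1"
  by (induction k) auto

lemma gm_zero: "K \<ge> 0 \<Longrightarrow> j < k \<Longrightarrow> gm K d p k (p j) = 0"
proof (induction k)
  case 0 then show ?case by simp
next
  case (Suc k)
  show ?case
  proof (cases "j = k")
    case True then show ?thesis using gm_nonneg[OF Suc.prems(1)] by simp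
  next
    case False
    then have "gm K d p k (p j) = 0" using Suc by simp
    then show ?thesis using Suc.prems(1) by (simp add: dist_nonneg min_def)
  qed
qed

lemma min_lip: "\<bar>min a b - min c e\<bar> \<le> max \<bar>a - c\<bar> \<bar>b - e\<bar>"
  for a b c e :: real
  by (simp add: min_def max_def abs_if)

lemma gm_lip: "K \<ge> 0 \<Longrightarrow> \<bar>gm K d p k x - gm K d p k y\<bar> \<le> K * dist_d d x y"
proof (induction k)
  case 0 then show ?case by (simp add: dist_nonneg)
next
  case (Suc k)
  have "\<bar>K * dist_d d x (p k) - K * dist_d d y (p k)\<bar> = K * \<bar>dist_d d x (p k) - dist_d d y (p k)\<bar>"
    using Suc.prems by (simp add: abs_mult right_diff_distrib[symmetric])
  also have "\<dots> \<le> K * dist_d d x y"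
  proof (rule mult_left_mono[OF _ Suc.prems])
    have "dist_d d x (p k) \<le> dist_d d x y + dist_d d y (p k)" by (rule dist_triangle_d)
    moreover have "dist_d d y (p k) \<le> dist_d d y x + dist_d d x (p k)" by (rule dist_triangle_d)
    ultimately show "\<bar>dist_d d x (p k) - dist_d d y (p k)\<bar> \<le> dist_d d x y"
      by (simp add: dist_sym_d[of d y x] abs_le_iff)
  qed
  finally have h: "\<bar>K * dist_d d x (p k) - K * dist_d d y (p k)\<bar> \<le> K * dist_d d x y" .
  have "\<bar>gm K d p (Suc k) x - gm K d p (Suc k) y\<bar>
        \<le> max \<bar>gm K d p k x - gm K d p k y\<bar> \<bar>K * dist_d d x (p k) - K * dist_d d y (p k)\<bar>"
    by (simp only: gm.simps min_lip)
  also have "\<dots> \<le> K * dist_d d x y" using Suc.IH[OF Suc.prems] h by simp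
  finally show ?case .
qed

lemma gm_lower:
  "(\<forall>j<k. t \<le> dist_d d x (p j)) \<Longrightarrow> K \<ge> 0 \<Longrightarrow> min 1 (K * t) \<le> gm K d p k x"
proof (induction k)
  case 0 then show ?case by simp
next
  case (Suc k)
  then have "min 1 (K * t) \<le> gm K d p k x" by simp
  moreover have "K * t \<le> K * dist_d d x (p k)"
    using Suc.prems by (intro mult_left_mono) auto
  ultimately show ?case by simp
qed

lemma gm_meas: "gm K d p k \<in> borel_measurable (lebesgue_d d)"
proof (induction k)
  case 0
  have "gm K d p 0 = (\<lambda>x. 1)" by (rule ext) simp
  then show ?case by simp
next
  case (Suc k)
  have "gm K d p (Suc k) = (\<lambda>x. min (gm K d p k x) (K * dist_d d x (p k)))" by (rule ext) simp
  then show ?case using Suc.IH by (simp add: borel_measurable_min borel_measurable_times dist_meas)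
qed

lemma info_zero:
  "(\<forall>j<k. g (P j (replicate j 0)) = 0) \<Longrightarrow> info P g k = replicate k 0"
proof (induction k)
  case 0 then show ?case by simp
next
  case (Suc k)
  then have "info P g k = replicate k 0" by simp
  with Suc.prems show ?case by (simp add: replicate_append_same)
qed



lemma S_d_int: "S_d D d f = (\<integral>x. indicator (D d) x * f x \<partial>lebesgue_d d)"
  by (simp add: S_d_def set_lebesgue_integral_def)

lemma lower_d:
  fixes D :: "nat \<Rightarrow> (nat \<Rightarrow> real) set" and L :: "nat \<Rightarrow> real"
  assumes op: "open_d d (D d)" and Dm: "D d \<in> sets (lebesgue_d d)"
    and fin: "emeasure (lebesgue_d d) (D d) = 1"
    and Lp: "L d > 0" and c: "c > 0" and Lc: "L d * sqrt (real d) > c"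
    and rz: "rz = 1 / (4 * (exp (1/2) * sqrt (2*pi)))"
    and eps: "\<epsilon> \<le> min 1 (c * rz) / 4"
    and ach: "achieves D d (C0 D L d) n \<epsilon>"
  shows "real n \<ge> 1/2 * 2^d"
proof (rule ccontr)
  assume nlt: "\<not> ?thesis"
  define a where "a = min 1 (c * rz)"
  have rzp: "rz > 0" using rz by simp
  have ap: "a > 0" using c rzp by (simp add: a_def)
  from ach obtain P \<phi> where adm: "admissible_points D d n P"
    and err: "\<forall>f\<in>C0 D L d. \<bar>S_d D d f - \<phi> (info P f n)\<bar> \<le> \<epsilon>"
    unfolding achieves_def by blast
  define p where "p j = P j (replicate j 0)" for j
  have pD: "j < n \<Longrightarrow> p j \<in> D d" for j
    using adm unfolding admissible_points_def p_def by simp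
  define g where "g = gm (L d) d p n"
  have Lnn: "L d \<ge> 0" using Lp by simp
  have g01: "0 \<le> g x" "g x \<le> 1" for x
    unfolding g_def using gm_nonneg[OF Lnn] gm_le1 by auto
  have glip: "\<bar>g x - g y\<bar> \<le> L d * dist_d d x y" for x y
    unfolding g_def by (rule gm_lip[OF Lnn])
  have gabs: "\<bar>g x\<bar> \<le> 1" for x using g01[of x] by simp
  have gC: "g \<in> C0 D L d"
    unfolding C0_def using gabs glip by blast
  have gC': "(\<lambda>x. - g x) \<in> C0 D L d"
  proof -
    have "\<bar>- g x - - g y\<bar> \<le> L d * dist_d d x y" for x y
      using glip[of y x] by (simp add: dist_sym_d)
    then show ?thesis unfolding C0_def using gabs by simp
  qed
  have gz: "\<forall>j<n. g (P j (replicate j 0)) = 0"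
  proof (intro allI impI)
    fix j assume "j < n"
    then have "g (p j) = 0" unfolding g_def by (rule gm_zero[OF Lnn])
    then show "g (P j (replicate j 0)) = 0" by (simp add: p_def)
  qed
  have infog: "info P g n = replicate n 0" by (rule info_zero) (rule gz)
  have infog': "info P (\<lambda>x. - g x) n = replicate n 0" by (rule info_zero) (use gz in simp)
  have e1: "\<bar>S_d D d g - \<phi> (replicate n 0)\<bar> \<le> \<epsilon>" using err gC infog by metis
  have e2: "\<bar>S_d D d (\<lambda>x. - g x) - \<phi> (replicate n 0)\<bar> \<le> \<epsilon>" using err gC' infog' by metis
  have Sneg: "S_d D d (\<lambda>x. - g x) = - S_d D d g" unfolding S_d_int by simp
  have Sle: "S_d D d g \<le> \<epsilon>" using e1 e2 unfolding Sneg by (simp add: abs_le_iff)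
  have Dsp: "D d \<subseteq> space_d d" using op by (simp add: open_d_def)
  define t where "t = rz * sqrt (real d)"
  define B where "B j = {x \<in> space_d d. dist_d d x (p j) < t}" for j
  define U where "U = (\<Union>j<n. B j)"
  have Bm: "B j \<in> sets (lebesgue_d d)" for j
  proof -
    have "{x \<in> space (lebesgue_d d). dist_d d x (p j) < t} \<in> sets (lebesgue_d d)"
      by measurable
    then show ?thesis by (simp add: B_def)
  qed
  have Um: "U \<in> sets (lebesgue_d d)" unfolding U_def using Bm by auto
  have Kq: "exp (1/2) * sqrt (2 * pi) * rz = 1/4" using rz by simp
  have Bmeas: "measure (lebesgue_d d) (D d \<inter> B j) \<le> (1/4)^d" for j
  proof -
    have "emeasure (lebesgue_d d) (D d \<inter> B j) \<le> emeasure (lebesgue_d d) (B j)"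
      using Bm by (intro emeasure_mono) auto
    also have "\<dots> \<le> ennreal ((1/4)^d)"
      using ball_bound[OF rzp, of d "p j"] unfolding B_def t_def Kq .
    finally have "emeasure (lebesgue_d d) (D d \<inter> B j) \<le> ennreal ((1/4)^d)" .
    then have "enn2real (emeasure (lebesgue_d d) (D d \<inter> B j)) \<le> enn2real (ennreal ((1/4)^d))"
      by (intro enn2real_mono) auto
    then show ?thesis by (simp add: measure_def)
  qed
  have DUm: "measure (lebesgue_d d) (D d \<inter> U) \<le> real n * (1/4)^d"
  proof -
    have eqU: "D d \<inter> U = (\<Union>j\<in>{..<n}. D d \<inter> B j)" by (auto simp: U_def)
    have "measure (lebesgue_d d) (\<Union>j\<in>{..<n}. D d \<inter> B j) \<le> (\<Sum>j\<in>{..<n}. measure (lebesgue_d d) (D d \<inter> B j))"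
      by (rule measure_UNION_le) (use Dm Bm in auto)
    then have "measure (lebesgue_d d) (D d \<inter> U) \<le> (\<Sum>j\<in>{..<n}. measure (lebesgue_d d) (D d \<inter> B j))"
      by (simp only: eqU)
    also have "\<dots> \<le> (\<Sum>j\<in>{..<n}. (1/4::real)^d)" by (intro sum_mono Bmeas)
    also have "\<dots> = real n * (1/4)^d" by simp
    finally show ?thesis .
  qed
  have Dfin: "emeasure (lebesgue_d d) (D d) \<noteq> \<infinity>" using fin by simp
  have measD: "measure (lebesgue_d d) (D d) = 1" using fin by (simp add: measure_def)
  have DUeq: "D d - U = D d - (D d \<inter> U)" by auto
  have mDU: "measure (lebesgue_d d) (D d - U) = 1 - measure (lebesgue_d d) (D d \<inter> U)"
    unfolding DUeq using measure_Diff[OF Dfin Dm _ Int_lower1, of U] Dm Um measD by simp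
  have nb: "real n * (1/4)^d < 1/2"
  proof -
    have n2: "real n < 2^d / 2" using nlt by simp
    have p: "(2::real)^d * (1/4)^d = (1/2)^d"
    proof -
      have "(2::real)^d * (1/4)^d = (2 * (1/4))^d" by (rule power_mult_distrib[symmetric])
      then show ?thesis by simp
    qed
    have "real n * (1/4)^d < 2^d / 2 * (1/4)^d"
      by (rule mult_strict_right_mono[OF n2]) simp
    also have "\<dots> = (1/2)^d / 2" using p by simp
    also have "\<dots> \<le> 1 / 2" using power_le_one[of "1/2::real" d] by simp
    finally show ?thesis .
  qed
  have mgt: "measure (lebesgue_d d) (D d - U) > 1/2" using mDU DUm nb by linarith
  have DUsets: "D d - U \<in> sets (lebesgue_d d)" using Dm Um by auto
  have DUfin: "emeasure (lebesgue_d d) (D d - U) < \<infinity>"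
  proof -
    have "emeasure (lebesgue_d d) (D d - U) \<le> emeasure (lebesgue_d d) (D d)"
      using Dm by (intro emeasure_mono) auto
    then show ?thesis using fin by (simp add: le_less_trans)
  qed
  have intg: "integrable (lebesgue_d d) (\<lambda>x. indicator (D d) x * g x)"
    by (rule lip_integrable[OF op Dm Lnn fin, of g 1]) (use glip g01 in auto)
  have inta: "integrable (lebesgue_d d) (\<lambda>x. a * indicator (D d - U) x)"
    using DUsets DUfin by (intro integrable_mult_right integrable_real_indicator) auto
  have aLt: "a \<le> min 1 (L d * t)"
  proof -
    have "c * rz \<le> L d * t" unfolding t_def using Lc rzp by (simp add: mult.commute mult.left_commute)
    then show ?thesis unfolding a_def by simp
  qed
  have "(\<integral>x. a * indicator (D d - U) x \<partial>lebesgue_d d) \<le> (\<integral>x. indicator (D d) x * g x \<partial>lebesgue_d d)"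
  proof (rule integral_mono[OF inta intg])
    fix x assume xs: "x \<in> space (lebesgue_d d)"
    show "a * indicator (D d - U) x \<le> indicator (D d) x * g x"
    proof (cases "x \<in> D d - U")
      case True
      then have "\<forall>j<n. t \<le> dist_d d x (p j)"
        using xs by (auto simp: U_def B_def not_less)
      then have "min 1 (L d * t) \<le> g x" unfolding g_def by (rule gm_lower[OF _ Lnn])
      then have "a \<le> g x" by (rule order_trans[OF aLt])
      with True show ?thesis by simp
    next
      case False
      then show ?thesis using g01 by (simp add: indicator_def)
    qed
  qed
  also have "\<dots> = S_d D d g" by (simp add: S_d_int)
  finally have "a * measure (lebesgue_d d) (D d - U) \<le> S_d D d g"
  proof -
    assume h: "(\<integral>x. a * indicator (D d - U) x \<partial>lebesgue_d d) \<le> S_d D d g"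
    have "(D d - U) \<inter> space_d d = D d - U" using Dsp by blast
    then show ?thesis using h by simp
  qed
  moreover have "a * (1/2) < a * measure (lebesgue_d d) (D d - U)"
    by (rule mult_strict_left_mono[OF mgt ap])
  ultimately show False using Sle eps ap unfolding a_def by simp
qed

lemma upper_d:
  fixes D :: "nat \<Rightarrow> (nat \<Rightarrow> real) set" and L :: "nat \<Rightarrow> real"
  assumes op: "open_d d (D d)" and Dm: "D d \<in> sets (lebesgue_d d)"
    and fin: "emeasure (lebesgue_d d) (D d) = 1"
    and xsD: "xs \<in> D d" and Lp: "L d > 0"
    and small: "L d * (\<bar>R\<bar> * sqrt (real d))
        + 2 * measure (lebesgue_d d) {x \<in> D d. dist_d d x xs \<ge> R * sqrt (real d)} \<le> \<epsilon>"
  shows "achieves D d (C0 D L d) 1 \<epsilon>"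
  unfolding achieves_def
proof (intro exI conjI ballI)
  show "admissible_points D d 1 (\<lambda>k ys. xs)" using xsD by (simp add: admissible_points_def)
  fix f assume fC: "f \<in> C0 D L d"
  have bd: "\<forall>x\<in>D d. \<bar>f x\<bar> \<le> 1" and lip: "\<forall>x\<in>D d. \<forall>y\<in>D d. \<bar>f x - f y\<bar> \<le> L d * dist_d d x y"
    using fC by (auto simp: C0_def)
  have Lnn: "L d \<ge> 0" using Lp by simp
  have Dsp: "D d \<subseteq> space_d d" using op by (simp add: open_d_def)
  define Far where "Far = {x \<in> D d. dist_d d x xs \<ge> R * sqrt (real d)}"
  have Farm: "Far \<in> sets (lebesgue_d d)"
  proof -
    have "{x \<in> space (lebesgue_d d). dist_d d x xs \<ge> R * sqrt (real d)} \<in> sets (lebesgue_d d)"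
      by measurable
    moreover have "Far = D d \<inter> {x \<in> space (lebesgue_d d). dist_d d x xs \<ge> R * sqrt (real d)}"
      using Dsp by (auto simp: Far_def)
    ultimately show ?thesis using Dm by auto
  qed
  have Farfin: "emeasure (lebesgue_d d) Far < \<infinity>"
  proof -
    have "emeasure (lebesgue_d d) Far \<le> emeasure (lebesgue_d d) (D d)"
      using Dm by (intro emeasure_mono) (auto simp: Far_def)
    then show ?thesis using fin by (simp add: le_less_trans)
  qed
  have Dfin: "emeasure (lebesgue_d d) (D d) < \<infinity>" using fin by simp
  have measD: "measure (lebesgue_d d) (D d) = 1" using fin by (simp add: measure_def)
  have intf: "integrable (lebesgue_d d) (\<lambda>x. indicator (D d) x * f x)"
    by (rule lip_integrable[OF op Dm Lnn fin lip bd])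
  have intc: "integrable (lebesgue_d d) (\<lambda>x. f xs * indicator (D d) x)"
    using Dm Dfin by (intro integrable_mult_right integrable_real_indicator) auto
  define h where "h x = indicator (D d) x * f x - f xs * indicator (D d) x" for x
  have inth: "integrable (lebesgue_d d) h" unfolding h_def using intf intc by simp
  define G where "G x = L d * (\<bar>R\<bar> * sqrt (real d)) * indicator (D d) x + 2 * indicator Far x" for x
  have intG: "integrable (lebesgue_d d) G" unfolding G_def
    using Dm Dfin Farm Farfin by (intro Bochner_Integration.integrable_add integrable_mult_right integrable_real_indicator) auto
  have eqS: "S_d D d f - f xs = integral\<^sup>L (lebesgue_d d) h"
  proof -
    have "integral\<^sup>L (lebesgue_d d) h = S_d D d f - f xs * measure (lebesgue_d d) (D d)"
      unfolding h_def S_d_int using intf intc Dsp by (simp add: Int_absorb2)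
    then show ?thesis using measD by simp
  qed
  have "\<bar>S_d D d f - f xs\<bar> \<le> (\<integral>x. \<bar>h x\<bar> \<partial>lebesgue_d d)"
    unfolding eqS by (rule integral_abs_bound)
  also have "\<dots> \<le> integral\<^sup>L (lebesgue_d d) G"
  proof (rule integral_mono[OF integrable_abs[OF inth] intG])
    fix x assume "x \<in> space (lebesgue_d d)"
    show "\<bar>h x\<bar> \<le> G x"
    proof (cases "x \<in> D d")
      case False then show ?thesis by (simp add: h_def G_def Far_def)
    next
      case xD: True
      have G0: "0 \<le> L d * (\<bar>R\<bar> * sqrt (real d))" using Lnn by simp
      show ?thesis
      proof (cases "x \<in> Far")
        case True
        have "\<bar>f x\<bar> \<le> 1" "\<bar>f xs\<bar> \<le> 1" using bd xD xsD by auto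
        then have "\<bar>f x - f xs\<bar> \<le> 2" by linarith
        then show ?thesis using True xD G0 by (simp add: h_def G_def)
      next
        case False
        then have dl: "dist_d d x xs < R * sqrt (real d)" using xD by (simp add: Far_def)
        have "\<bar>f x - f xs\<bar> \<le> L d * dist_d d x xs" using lip xD xsD by blast
        also have "\<dots> \<le> L d * (\<bar>R\<bar> * sqrt (real d))"
        proof (rule mult_left_mono[OF _ Lnn])
          have "R * sqrt (real d) \<le> \<bar>R\<bar> * sqrt (real d)" by (simp add: mult_right_mono)
          then show "dist_d d x xs \<le> \<bar>R\<bar> * sqrt (real d)" using dl by linarith
        qed
        finally show ?thesis using False xD by (simp add: h_def G_def)
      qed
    qed
  qed
  also have "integral\<^sup>L (lebesgue_d d) G
      = L d * (\<bar>R\<bar> * sqrt (real d)) + 2 * measure (lebesgue_d d) Far"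
  proof -
    have "Far \<inter> space_d d = Far" "D d \<inter> space_d d = D d" using Dsp by (auto simp: Far_def)
    then show ?thesis
      unfolding G_def using Dm Dfin Farm Farfin measD by simp
  qed
  also have "\<dots> \<le> \<epsilon>" using small by (simp add: Far_def)
  finally show "\<bar>S_d D d f - (\<lambda>ys. hd ys) (info (\<lambda>k ys. xs) f 1)\<bar> \<le> \<epsilon>" by simp
qed



theorem theorem3p1:
  fixes D :: "nat \<Rightarrow> (nat \<Rightarrow> real) set" and L :: "nat \<Rightarrow> real"
  assumes "property_P D"
    and "\<forall>d. L d > 0"
  shows "curse D (C0 D L) \<longleftrightarrow> limsup (\<lambda>d. ereal (L d * sqrt (real d))) > 0"
proof -
  have Dp: "\<forall>d. open_d d (D d) \<and> D d \<in> sets (lebesgue_d d) \<and> emeasure (lebesgue_d d) (D d) = 1"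
    using assms(1) unfolding property_P_def by blast
  obtain xs R where xsD: "\<forall>d. xs d \<in> D d"
    and far: "(\<lambda>d. measure (lebesgue_d d) {x \<in> D d. dist_d d x (xs d) \<ge> R * sqrt (real d)}) \<longlonglongrightarrow> 0"
    using assms(1) unfolding property_P_def by blast
  define m where "m d = measure (lebesgue_d d) {x \<in> D d. dist_d d x (xs d) \<ge> R * sqrt (real d)}" for d
  have u0: "0 \<le> L d * sqrt (real d)" for d using assms(2) by (simp add: less_imp_le)
  have iff: "limsup (\<lambda>d. ereal (L d * sqrt (real d))) > 0 \<longleftrightarrow> (\<exists>c>0. infinite {d. c < L d * sqrt (real d)})"
    by (rule limsup_pos_iff) (rule u0)
  show ?thesis unfolding iff
  proof
    assume "curse D (C0 D L)"
    then obtain c0 \<epsilon>0 \<gamma> where pos: "c0 > 0" "\<epsilon>0 > 0" "\<gamma> > 0"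
      and inf: "infinite {d. \<forall>\<epsilon>. 0 < \<epsilon> \<and> \<epsilon> \<le> \<epsilon>0 \<longrightarrow>
        (\<forall>n. achieves D d (C0 D L d) n \<epsilon> \<longrightarrow> real n \<ge> c0 * (1 + \<gamma>) ^ d)}" (is "infinite ?S")
      unfolding curse_def by blast
    show "\<exists>c>0. infinite {d. c < L d * sqrt (real d)}"
    proof (rule ccontr)
      assume nc: "\<not> ?thesis"
      have lim: "(\<lambda>d. L d * sqrt (real d)) \<longlonglongrightarrow> 0"
        by (rule not_infinite_tendsto) (use u0 nc in auto)
      have "(\<lambda>d. \<bar>R\<bar> * (L d * sqrt (real d)) + 2 * m d) \<longlonglongrightarrow> \<bar>R\<bar> * 0 + 2 * 0"
        using far unfolding m_def[symmetric] by (intro tendsto_intros lim)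
      then have lim2: "(\<lambda>d. L d * (\<bar>R\<bar> * sqrt (real d)) + 2 * m d) \<longlonglongrightarrow> 0"
        by (simp add: ac_simps)
      have ev1: "eventually (\<lambda>d. L d * (\<bar>R\<bar> * sqrt (real d)) + 2 * m d < \<epsilon>0) sequentially"
        by (rule order_tendstoD(2)[OF lim2 pos(2)])
      obtain N :: nat where N: "1 / (c0 * \<gamma>) < real N" using reals_Archimedean2 by blast
      have ev2: "eventually (\<lambda>d. 1 < c0 * (1 + \<gamma>) ^ d) sequentially"
        unfolding eventually_sequentially
      proof (intro exI allI impI)
        fix d assume dN: "N \<le> d"
        have cg: "c0 * \<gamma> > 0" using pos by simp
        have "1 < real N * (c0 * \<gamma>)" using N cg by (simp add: divide_less_eq)
        also have "\<dots> \<le> real d * (c0 * \<gamma>)" using dN cg by (intro mult_right_mono) auto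
        also have "\<dots> = c0 * (real d * \<gamma>)" by simp
        also have "\<dots> \<le> c0 * (1 + real d * \<gamma>)" using pos by simp
        also have "\<dots> \<le> c0 * (1 + \<gamma>) ^ d"
          using Bernoulli_inequality[of \<gamma> d] pos by (intro mult_left_mono) auto
        finally show "1 < c0 * (1 + \<gamma>) ^ d" .
      qed
      have "eventually (\<lambda>d. d \<notin> ?S) sequentially"
        using ev1 ev2
      proof eventually_elim
        case (elim d)
        have "achieves D d (C0 D L d) 1 \<epsilon>0"
          by (rule upper_d[where d=d and D=D and xs="xs d" and L=L and R=R]) (use Dp xsD assms(2) elim(1) in \<open>auto simp: m_def\<close>)
        then have "d \<in> ?S \<Longrightarrow> real 1 \<ge> c0 * (1 + \<gamma>) ^ d" using pos(2) by blast
        then show "d \<notin> ?S" using elim(2) by auto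
      qed
      then have "finite {d. \<not> d \<notin> ?S}"
        unfolding cofinite_eq_sequentially[symmetric] eventually_cofinite .
      moreover have "{d. \<not> d \<notin> ?S} = ?S" by blast
      ultimately have "finite ?S" by simp
      with inf show False by simp
    qed
  next
    assume "\<exists>c>0. infinite {d. c < L d * sqrt (real d)}"
    then obtain c where c: "c > 0" "infinite {d. c < L d * sqrt (real d)}" by blast
    define rz where "rz = 1 / (4 * (exp (1/2) * sqrt (2*pi)))"
    define a where "a = min 1 (c * rz)"
    have apos: "a > 0" using c by (simp add: a_def rz_def)
    let ?S = "{d. \<forall>\<epsilon>. 0 < \<epsilon> \<and> \<epsilon> \<le> a / 4 \<longrightarrow>
        (\<forall>n. achieves D d (C0 D L d) n \<epsilon> \<longrightarrow> real n \<ge> 1/2 * (1 + 1) ^ d)}"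
    have sub: "{d. c < L d * sqrt (real d)} \<subseteq> ?S"
    proof
      fix d assume "d \<in> {d. c < L d * sqrt (real d)}"
      then have Lc: "c < L d * sqrt (real d)" by simp
      show "d \<in> ?S"
      proof (intro CollectI allI impI)
        fix \<epsilon> n assume e: "0 < \<epsilon> \<and> \<epsilon> \<le> a / 4" and ach: "achieves D d (C0 D L d) n \<epsilon>"
        have "real n \<ge> 1/2 * 2^d"
          by (rule lower_d[where d=d and D=D and L=L and c=c and rz=rz]) (use Dp assms(2) c Lc e ach in \<open>auto simp: rz_def a_def\<close>)
        then show "real n \<ge> 1/2 * (1 + 1) ^ d" by simp
      qed
    qed
    have "infinite ?S" using infinite_super[OF sub c(2)] .
    then show "curse D (C0 D L)"
      unfolding curse_def
      apply (rule_tac x="1/2" in exI)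
      apply (rule_tac x="a/4" in exI)
      apply (rule_tac x="1" in exI)
      using apos by simp
  qed
qed

end
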